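(* For $k\geq 0$ let $\mathcal{E}_k(x)=\sum_{n=1}^{\infty}e(n)^{k}x^n$ (with $0^0=1$). Then $\mathcal{E}_0(x)=\frac{x}{1-x}$, and for every $k\geq 1$, $$\mathcal{E}_k(x)-\mathcal{E}_k(x^2)-\frac{x^2+1}{x}\,\mathcal{E}_k(x^4)=\sum_{j=0}^{k-1}C(k,j)\left(\mathcal{E}_j(x^2)+\frac{x^2+1}{x}\,\mathcal{E}_j(x^4)\right),$$ where $C(k,j)=\binom{k}{j}$.
   Context: The Stern polynomials $B_n(t)\in\mathbb{Z}[t]$ are defined by $B_0(t)=0$, $B_1(t)=1$, and for $n\geq 1$: $B_{2n}(t)=tB_n(t)$, $B_{2n+1}(t)=B_n(t)+B_{n+1}(t)$. For $n\geq1$ let $e(n)=\deg B_n(t)$. *)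

theory Defs
  imports "HOL-Computational_Algebra.Computational_Algebra"
begin

function stern :: "nat \<Rightarrow> int poly" where
  "stern n =
     (if n = 0 then 0
      else if n = 1 then 1
      else if even n then [:0, 1:] * stern (n div 2)
      else stern (n div 2) + stern (n div 2 + 1))"
  by pat_completeness auto
termination
  by (relation "measure id") (auto elim!: oddE)

definition e :: "nat \<Rightarrow> nat" where
  "e n = degree (stern n)"

definition E :: "nat \<Rightarrow> real fps" where
  "E k = Abs_fps (\<lambda>n. if n = 0 then 0 else real (e n ^ k))"

end

theory Submission imports Defs begin
declare stern.simps[simp del]

lemma stern_even: "n \<ge> 1 \<Longrightarrow> stern (2*n) = [:0,1:] * stern n"
  by (subst stern.simps) auto
lemma stern_odd: "n \<ge> 1 \<Longrightarrow> stern (2*n+1) = stern n + stern (n+1)"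
  by (subst stern.simps) auto
lemma stern_1: "stern (Suc 0) = 1" by (subst stern.simps) auto

lemma stern_pos: "n \<ge> 1 \<Longrightarrow> stern n \<noteq> 0 \<and> (\<forall>i. coeff (stern n) i \<ge> 0)"
proof (induction n rule: less_induct)
  case (less n)
  show ?case
  proof (cases "n = 1")
    case True then show ?thesis by (simp add: stern_1 coeff_1)
  next
    case False
    then obtain m where m: "m \<ge> 1" "n = 2*m \<or> n = 2*m+1" using less.prems
      by (metis One_nat_def add_0 dvd_mult_div_cancel le_add1 le_numeral_extra(2) less_one nat_neq_iff not_less odd_two_times_div_two_succ oddE one_le_mult_iff)
    show ?thesis using m(2)
    proof
      assume n: "n = 2*m"
      have "m < n" using n m by simp
      with less.IH m(1) have "stern m \<noteq> 0 \<and> (\<forall>i. coeff (stern m) i \<ge> 0)" by blast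
      then show ?thesis using n m stern_even by (auto simp: coeff_pCons split: nat.split)
    next
      assume n: "n = 2*m+1"
      have "m < n" "m+1 < n" using n m by simp_all
      with less.IH m(1) have a: "stern m \<noteq> 0 \<and> (\<forall>i. coeff (stern m) i \<ge> 0)"
         and b: "stern (m+1) \<noteq> 0 \<and> (\<forall>i. coeff (stern (m+1)) i \<ge> 0)" by auto
      have "coeff (stern m + stern (m+1)) (degree (stern m)) > 0"
        using a b by (simp add: add_pos_nonneg order_le_neq_trans)
      then have "stern m + stern (m+1) \<noteq> 0" by (metis coeff_0 less_irrefl)
      then show ?thesis using a b n stern_odd m by (auto intro: add_nonneg_nonneg)
    qed
  qed
qed

lemma degree_add_nonneg:
  fixes p q :: "int poly"
  assumes "p \<noteq> 0" "q \<noteq> 0" "\<forall>i. coeff p i \<ge> 0" "\<forall>i. coeff q i \<ge> 0"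
  shows "degree (p + q) = max (degree p) (degree q)"
proof (rule antisym)
  show "degree (p + q) \<le> max (degree p) (degree q)" by (rule degree_add_le_max)
  have lp: "coeff p (degree p) > 0" using assms by (simp add: order_le_neq_trans)
  have lq: "coeff q (degree q) > 0" using assms by (simp add: order_le_neq_trans)
  have "coeff (p+q) (max (degree p) (degree q)) \<noteq> 0"
    using lp lq assms(3,4)
  proof (cases "degree p \<le> degree q")
    case True
    then show ?thesis using lq assms(3) by (simp add: max_def) (metis add_nonneg_pos less_irrefl)
  next
    case False
    then show ?thesis using lp assms(4) by (simp add: max_def) (metis add_pos_nonneg less_irrefl)
  qed
  then show "max (degree p) (degree q) \<le> degree (p + q)" by (rule le_degree)
qed

lemma e_even: "n \<ge> 1 \<Longrightarrow> e (2*n) = e n + 1"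
  using stern_pos[of n] by (simp add: e_def stern_even degree_mult_eq)

lemma e_odd: "n \<ge> 1 \<Longrightarrow> e (2*n+1) = max (e n) (e (n+1))"
proof -
  assume n: "n \<ge> 1"
  have "degree (stern n + stern (n+1)) = max (degree (stern n)) (degree (stern (n+1)))"
    using stern_pos[of n] stern_pos[of "n+1"] n by (intro degree_add_nonneg) auto
  then show ?thesis unfolding e_def stern_odd[OF n] .
qed

lemma e_1: "e (Suc 0) = 0" by (simp add: e_def stern_1)

lemma e_step: "n \<ge> 1 \<Longrightarrow> e (n+1) \<le> e n + 1 \<and> e n \<le> e (n+1) + 1"
proof (induction n rule: less_induct)
  case (less n)
  show ?case
  proof (cases "n = 1")
    case True
    have "e (2*1) = e 1 + 1" by (rule e_even) simp
    then show ?thesis using True e_1 by (simp add: numeral_2_eq_2)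
  next
    case False
    then obtain m where m: "m \<ge> 1" "n = 2*m \<or> n = 2*m+1" using less.prems
      by (metis One_nat_def add_0 dvd_mult_div_cancel le_add1 le_numeral_extra(2) less_one nat_neq_iff not_less odd_two_times_div_two_succ oddE one_le_mult_iff)
    have "m < n" using m by auto
    with less.IH m(1) have ih: "e (m+1) \<le> e m + 1 \<and> e m \<le> e (m+1) + 1" by blast
    show ?thesis using m(2)
    proof
      assume n: "n = 2*m"
      then show ?thesis using e_even[of m] e_odd[of m] m ih by auto
    next
      assume n: "n = 2*m+1"
      have "2*m+1+1 = 2*(m+1)" by simp
      then show ?thesis using n e_even[of "m+1"] e_odd[of m] m ih by auto
    qed
  qed
qed

lemma e_4p1: "m \<ge> 1 \<Longrightarrow> e (4*m+1) = e m + 1"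
proof -
  assume m: "m \<ge> 1"
  have "e (4*m+1) = max (e (2*m)) (e (2*m+1))" using e_odd[of "2*m"] m by simp
  then show ?thesis using e_even[of m] e_odd[of m] e_step[of m] m by auto
qed

lemma e_4p3: "e (4*m+3) = e (m+1) + 1"
proof -
  have eq: "4*m+3 = 2*(2*m+1)+1" "2*m+1+1 = 2*(m+1)" by simp_all
  have "e (4*m+3) = max (e (2*m+1)) (e (2*(m+1)))" unfolding eq(1)
    using e_odd[of "2*m+1"] eq(2) by simp
  moreover have "e (2*(m+1)) = e (m+1) + 1" using e_even[of "m+1"] by simp
  moreover have "e (2*m+1) \<le> e (m+1) + 1"
  proof (cases "m = 0")
    case True
    have "e (2*1) = e 1 + 1" by (rule e_even) simp
    then show ?thesis using True e_1 by simp
  next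
    case False then show ?thesis using e_odd[of m] e_step[of m] by auto
  qed
  ultimately show ?thesis by (simp add: algebra_simps)
qed

lemma E_nth: "E k $ n = (if n = 0 then 0 else real (e n ^ k))"
  by (simp add: E_def)

lemma comp_nth:
  fixes f :: "real fps"
  assumes d: "d > 0"
  shows "(fps_compose f (fps_X ^ d)) $ n = (if d dvd n then f $ (n div d) else 0)"
proof -
  have "(fps_compose f (fps_X ^ d)) $ n = (\<Sum>i=0..n. f $ i * (if n = d*i then 1 else 0))"
    by (simp add: fps_compose_def power_mult[symmetric])
  also have "\<dots> = (\<Sum>i=0..n. if i = n div d \<and> d dvd n then f $ i else 0)"
    using d by (intro sum.cong) auto
  also have "\<dots> = (if d dvd n then f $ (n div d) else 0)"
    using d by (auto simp: sum.delta' div_le_dividend)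
  finally show ?thesis .
qed

lemma divX: "(g :: real fps) / fps_X = fps_shift 1 g"
  by (simp add: fps_divide_def)

lemma E0: "E 0 = fps_X / (1 - fps_X)"
proof -
  have "fps_X / (1 - fps_X) = fps_X * inverse (1 - fps_X :: real fps)"
    by (rule fps_divide_unit') simp
  also have "\<dots> = fps_X * Abs_fps (\<lambda>n. 1)" by (simp add: fps_inverse_one_minus_fps_X)
  also have "\<dots> = E 0" by (rule fps_ext) (simp add: E_nth)
  finally show ?thesis by simp
qed

definition T :: "(nat \<Rightarrow> real) \<Rightarrow> nat \<Rightarrow> real" where
  "T f n = (if 2 dvd n then f (n div 2) else 0) + (if 4 dvd (n+1) then f ((n+1) div 4) else 0)
     + (if n \<ge> 1 \<and> 4 dvd (n-1) then f ((n-1) div 4) else 0)"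

lemma G_nth:
  fixes f :: "real fps"
  shows "(fps_compose f (fps_X ^ 2) + ((fps_X ^ 2 + 1) * fps_compose f (fps_X ^ 4)) / fps_X) $ n
     = T (\<lambda>m. f $ m) n"
proof -
  have "(((fps_X ^ 2 + 1) * fps_compose f (fps_X ^ 4)) / fps_X) $ n
      = (fps_X ^ 2 * fps_compose f (fps_X ^ 4)) $ (n+1) + fps_compose f (fps_X ^ 4) $ (n+1)"
    by (simp add: divX distrib_right)
  also have "\<dots> = (if n \<ge> 1 \<and> 4 dvd (n-1) then f $ ((n-1) div 4) else 0)
      + (if 4 dvd (n+1) then f $ ((n+1) div 4) else 0)"
    by (simp add: fps_X_power_mult_nth comp_nth)
  finally show ?thesis by (simp add: T_def comp_nth)
qed

lemma sum_if: "(\<Sum>j\<in>S. c j * (if P then x j else 0)) = (if P then (\<Sum>j\<in>S. c j * x j) else (0::real))"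
  by (cases P) auto

lemma T_sum: "T (\<lambda>m. \<Sum>j\<in>S. c j * f j m) n = (\<Sum>j\<in>S. c j * T (f j) n)"
  by (simp only: T_def distrib_left sum.distrib sum_if)

lemma T_diff: "T (\<lambda>m. f m - g m) n = T f n - T g n"
  by (simp add: T_def)

lemma binom_sum:
  "(\<Sum>j=0..k-1. real (k choose j) * E j $ m) =
     (if m = 0 then 0 else (real (e m) + 1) ^ k) - E k $ m" if k: "k \<ge> 1"
proof (cases "m = 0")
  case True then show ?thesis by (simp add: E_nth)
next
  case False
  obtain k' where k': "k = Suc k'" using k by (cases k) auto
  have "(real (e m) + 1) ^ k = (\<Sum>j=0..k. real (k choose j) * real (e m) ^ j)"
    by (simp add: binomial_ring atMost_atLeast0)
  also have "\<dots> = (\<Sum>j=0..k-1. real (k choose j) * real (e m) ^ j) + real (e m) ^ k"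
    using k' by simp
  finally show ?thesis using False by (simp add: E_nth)
qed

lemma key: "k \<ge> 1 \<Longrightarrow> E k $ n = T (\<lambda>m. if m = 0 then 0 else (real (e m) + 1) ^ k) n"
proof -
  assume k: "k \<ge> 1"
  obtain q r where qr: "n = 4*q + r" "r < 4" by (metis div_mult_mod_eq mod_less_divisor zero_less_numeral mult.commute)
  have "r = 0 \<or> r = 1 \<or> r = 2 \<or> r = 3" using qr by auto
  then show ?thesis
  proof (elim disjE)
    assume r: "r = 0"
    show ?thesis
    proof (cases "q = 0")
      case True then show ?thesis using qr r by (simp add: E_nth T_def)
    next
      case False
      have "n = 2*(2*q)" "\<not> 4 dvd (n+1)" "\<not> 4 dvd (n-1)" using qr r False by presburger+
      then show ?thesis using e_even[of "2*q"] False k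
        by (auto simp: E_nth T_def add.commute)
    qed
  next
    assume r: "r = 2"
    have "n = 2*(2*q+1)" "\<not> 4 dvd (n+1)" "\<not> 4 dvd (n-1)" using qr r by presburger+
    then show ?thesis using e_even[of "2*q+1"] k by (auto simp: E_nth T_def add.commute)
  next
    assume r: "r = 1"
    have "\<not> 2 dvd n" "\<not> 4 dvd (n+1)" "(n-1) div 4 = q" "n \<ge> 1" "4 dvd (n-1)" using qr r by presburger+
    moreover have "q \<ge> 1 \<Longrightarrow> e n = e q + 1" using e_4p1[of q] qr r by simp
    moreover have "q = 0 \<Longrightarrow> n = 1" using qr r by simp
    ultimately show ?thesis using k e_1 by (cases "q = 0") (auto simp: E_nth T_def add.commute)
  next
    assume r: "r = 3"
    have "\<not> 2 dvd n" "4 dvd (n+1)" "(n+1) div 4 = q+1" "\<not> 4 dvd (n-1)" using qr r by presburger+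
    moreover have "e n = e (q+1) + 1" using e_4p3[of q] qr r by simp
    ultimately show ?thesis using k by (auto simp: E_nth T_def add.commute)
  qed
qed

theorem mainTheorem19:
  shows "E 0 = fps_X / (1 - fps_X)
    \<and> (\<forall>k\<ge>1. E k - fps_compose (E k) (fps_X ^ 2)
          - ((fps_X ^ 2 + 1) * fps_compose (E k) (fps_X ^ 4)) / fps_X
        = (\<Sum>j=0..k-1. of_nat (k choose j) *
             (fps_compose (E j) (fps_X ^ 2)
              + ((fps_X ^ 2 + 1) * fps_compose (E j) (fps_X ^ 4)) / fps_X)))"
proof (intro conjI allI impI)
  show "E 0 = fps_X / (1 - fps_X)" by (rule E0)
next
  fix k :: nat assume k: "k \<ge> 1"
  define A where "A = (\<lambda>m. if m = 0 then 0 else (real (e m) + 1) ^ k)"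
  show "E k - fps_compose (E k) (fps_X ^ 2)
          - ((fps_X ^ 2 + 1) * fps_compose (E k) (fps_X ^ 4)) / fps_X
        = (\<Sum>j=0..k-1. of_nat (k choose j) *
             (fps_compose (E j) (fps_X ^ 2)
              + ((fps_X ^ 2 + 1) * fps_compose (E j) (fps_X ^ 4)) / fps_X))"
  proof (rule fps_ext)
    fix n
    have l: "(E k - fps_compose (E k) (fps_X ^ 2)
          - ((fps_X ^ 2 + 1) * fps_compose (E k) (fps_X ^ 4)) / fps_X) $ n
        = E k $ n - T (\<lambda>m. E k $ m) n"
      using G_nth[of "E k" n] by simp
    have "(\<Sum>j=0..k-1. of_nat (k choose j) *
             (fps_compose (E j) (fps_X ^ 2)
              + ((fps_X ^ 2 + 1) * fps_compose (E j) (fps_X ^ 4)) / fps_X)) $ n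
        = (\<Sum>j=0..k-1. real (k choose j) * T (\<lambda>m. E j $ m) n)"
      unfolding fps_sum_nth
    proof (intro sum.cong refl)
      fix j
      have c: "(of_nat c * G) $ n = real c * G $ n" for c and G :: "real fps"
        by (simp flip: fps_of_nat)
      show "(of_nat (k choose j) *
             (fps_compose (E j) (fps_X ^ 2)
              + ((fps_X ^ 2 + 1) * fps_compose (E j) (fps_X ^ 4)) / fps_X)) $ n
           = real (k choose j) * T (\<lambda>m. E j $ m) n"
        unfolding c G_nth ..
    qed
    also have "\<dots> = T (\<lambda>m. \<Sum>j=0..k-1. real (k choose j) * E j $ m) n"
      by (rule T_sum[symmetric])
    also have "\<dots> = T (\<lambda>m. A m - E k $ m) n"
      using binom_sum[OF k] by (simp add: A_def)
    also have "\<dots> = T A n - T (\<lambda>m. E k $ m) n" by (rule T_diff)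
    also have "\<dots> = E k $ n - T (\<lambda>m. E k $ m) n" using key[OF k] by (simp add: A_def)
    finally show "(E k - fps_compose (E k) (fps_X ^ 2)
          - ((fps_X ^ 2 + 1) * fps_compose (E k) (fps_X ^ 4)) / fps_X) $ n
        = (\<Sum>j=0..k-1. of_nat (k choose j) *
             (fps_compose (E j) (fps_X ^ 2)
              + ((fps_X ^ 2 + 1) * fps_compose (E j) (fps_X ^ 4)) / fps_X)) $ n"
      using l by simp
  qed
qed

end
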